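(* Let $m\ge 2$ be an integer and let $\sigma_0=\pm1$ if $m$ is odd and $\sigma_0=(-1)^{m/2}$ if $m$ is even. For a real $(m-1)\times(m-1)$ signed permutation matrix $P$ and $\tau>0$, consider the linear system $$D\,\partial_t q + A\,\partial_x q = B q,\qquad q(x,t)=(q_0,\dots,q_{m-1})^T\in\mathbb{C}^m,$$ with $$A=\begin{bmatrix} 0_{1\times(m-1)} & \sigma_0\\ P & 0_{(m-1)\times 1}\end{bmatrix},\quad B=\begin{bmatrix} 0 & 0_{1\times(m-1)}\\ 0_{(m-1)\times 1} & P\end{bmatrix},\quad D=\operatorname{diag}(1,\tau,\dots,\tau).$$ Call this system stable if for every $\tau>0$, every real wavenumber $k$, and every $\omega\in\mathbb{C}$ with $\det(-i\omega D + ikA - B)=0$, one has $\operatorname{Im}\omega\le 0$. Then the system is stable if and only if $P=P^*$, where $P^*=(p^*_{ij})_{i,j=1}^{m-1}$ is defined by $$p^*_{ij}=\begin{cases}0 & i+j\ne m,\\ \sigma_0(-1)^{j-1} & i+j=m,\ j\le m/2,\\ \sigma_0(-1)^{m-j} & i+j=m,\ j> m/2.\end{cases}$$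
   Context: A real signed permutation matrix is a square matrix with all entries in $\{-1,0,+1\}$ having exactly one nonzero entry in each row and in each column. The system is a first-order relaxation of the linear PDE $\partial_t u+\sigma_0\partial_x^m u=0$, with $q_j$ intended to approximate $\partial_x^j u$; written componentwise it reads $\partial_t q_0+\sigma_0\partial_x q_{m-1}=0$ and, for $i=1,\dots,m-1$, $\tau\partial_t q_i+\sum_{j=1}^{m-1}p_{ij}\partial_x q_{j-1}=\sum_{j=1}^{m-1}p_{ij}q_j$. The dispersion relation is obtained from the ansatz $q(x,t)=\hat q\,e^{i(kx-\omega t)}$. *)

theory Defs
  imports "Jordan_Normal_Form.Determinant"
begin

text \<open>Matrices are Jordan_Normal_Form matrices with 0-based indices.
  The paper's 1-based index i corresponds to the 0-based index i - 1.\<close>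

definition signed_perm_mat :: "nat \<Rightarrow> real mat \<Rightarrow> bool" where
  "signed_perm_mat n P \<longleftrightarrow>
     P \<in> carrier_mat n n \<and>
     (\<forall>i<n. \<forall>j<n. P $$ (i, j) \<in> {-1, 0, 1}) \<and>
     (\<forall>i<n. \<exists>!j. j < n \<and> P $$ (i, j) \<noteq> 0) \<and>
     (\<forall>j<n. \<exists>!i. i < n \<and> P $$ (i, j) \<noteq> 0)"

text \<open>Entry p*_{ij} of the paper, with 1-based indices i, j.\<close>
definition pstar_entry :: "nat \<Rightarrow> real \<Rightarrow> nat \<Rightarrow> nat \<Rightarrow> real" where
  "pstar_entry m \<sigma>0 i j =
     (if i + j \<noteq> m then 0
      else if 2 * j \<le> m then \<sigma>0 * (-1) ^ (j - 1)
      else \<sigma>0 * (-1) ^ (m - j))"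

definition Pstar :: "nat \<Rightarrow> real \<Rightarrow> real mat" where
  "Pstar m \<sigma>0 = mat (m - 1) (m - 1) (\<lambda>(i, j). pstar_entry m \<sigma>0 (i + 1) (j + 1))"

text \<open>A = [[0, sigma0]; [P, 0]] (size m x m).\<close>
definition sysA :: "nat \<Rightarrow> real \<Rightarrow> real mat \<Rightarrow> real mat" where
  "sysA m \<sigma>0 P = mat m m (\<lambda>(i, j).
     if i = 0 then (if j = m - 1 then \<sigma>0 else 0)
     else (if j = m - 1 then 0 else P $$ (i - 1, j)))"

definition sysB :: "nat \<Rightarrow> real mat \<Rightarrow> real mat" where
  "sysB m P = mat m m (\<lambda>(i, j).
     if i = 0 \<or> j = 0 then 0 else P $$ (i - 1, j - 1))"

definition sysD :: "nat \<Rightarrow> real \<Rightarrow> real mat" where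
  "sysD m \<tau> = mat m m (\<lambda>(i, j). if i \<noteq> j then 0 else if i = 0 then 1 else \<tau>)"

definition dispersion_mat :: "nat \<Rightarrow> real \<Rightarrow> real mat \<Rightarrow> real \<Rightarrow> real \<Rightarrow> complex \<Rightarrow> complex mat" where
  "dispersion_mat m \<sigma>0 P \<tau> k \<omega> =
     (- \<i> * \<omega>) \<cdot>\<^sub>m map_mat complex_of_real (sysD m \<tau>)
     + (\<i> * complex_of_real k) \<cdot>\<^sub>m map_mat complex_of_real (sysA m \<sigma>0 P)
     - map_mat complex_of_real (sysB m P)"

definition stable_system :: "nat \<Rightarrow> real \<Rightarrow> real mat \<Rightarrow> bool" where
  "stable_system m \<sigma>0 P \<longleftrightarrow>
     (\<forall>\<tau>::real. \<tau> > 0 \<longrightarrow> (\<forall>k::real. \<forall>\<omega>::complex.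
        det (dispersion_mat m \<sigma>0 P \<tau> k \<omega>) = 0 \<longrightarrow> Im \<omega> \<le> 0))"

end

theory Submission
  imports Defs "Jordan_Normal_Form.Char_Poly"
begin

lemma inj_on_funpow:
  assumes "inj_on h A" "h ` A \<subseteq> A"
  shows "inj_on (h^^s) A"
proof (induction s)
  case 0 then show ?case by simp
next
  case (Suc s)
  have "(h^^Suc s) = (h^^s) \<circ> h" by (rule funpow_Suc_right)
  moreover have "inj_on ((h^^s) \<circ> h) A"
    using Suc assms by (meson comp_inj_on inj_on_subset)
  ultimately show ?case by (simp only:)
qed

lemma funpow_in:
  assumes "\<forall>j<n. h j < n" "i < n" shows "(h^^t) i < n"
  using assms by (induction t) auto

lemma cycle_eigen:
  fixes h :: "nat \<Rightarrow> nat" and w :: "nat \<Rightarrow> real" and lam :: complex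
  assumes hn: "\<forall>j<n. h j < n" and inj: "inj_on h {..<n}"
    and w: "\<forall>j<n. w j = 1 \<or> w j = -1" and i: "i < n"
    and L: "L > 0" "(h^^L) i = i" and minL: "\<forall>t. 0 < t \<and> t < L \<longrightarrow> (h^^t) i \<noteq> i"
    and lam: "lam ^ L = (\<Prod>t<L. complex_of_real (w ((h^^t) i)))"
  shows "\<exists>x. x i = 1 \<and> (\<forall>j<n. complex_of_real (w j) * x (h j) = lam * x j)"
proof -
  define c where "c t = (\<Prod>u<t. complex_of_real (w ((h^^u) i)))" for t
  have orb: "(h^^t) i < n" for t using funpow_in[OF hn i] .
  have himg: "h ` {..<n} \<subseteq> {..<n}" using hn by auto
  have c2: "c t * c t = 1" for t
  proof (induction t)
    case 0 then show ?case by (simp add: c_def)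
  next
    case (Suc t)
    have "c (Suc t) = c t * complex_of_real (w ((h^^t) i))" by (simp add: c_def)
    moreover have "w ((h^^t) i) = 1 \<or> w ((h^^t) i) = -1" using w orb by auto
    ultimately show ?case using Suc by (auto simp: algebra_simps)
  qed
  have uniq: "s = t" if "s < L" "t < L" "(h^^s) i = (h^^t) i" for s t
  proof (rule ccontr)
    assume ne: "s \<noteq> t"
    { fix a b assume ab: "a < b" "b < L" "(h^^a) i = (h^^b) i"
      have "(h^^b) i = (h^^a) ((h^^(b-a)) i)"
        using ab by (metis funpow_add le_add_diff_inverse less_imp_le comp_apply)
      hence "(h^^a) ((h^^(b-a)) i) = (h^^a) i" using ab by simp
      moreover have "inj_on (h^^a) {..<n}" by (rule inj_on_funpow[OF inj himg])
      ultimately have "(h^^(b-a)) i = i" using orb i by (meson inj_onD lessThan_iff)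
      with minL ab have False by auto }
    then show False using ne that by (metis linorder_neqE_nat)
  qed
  define x where "x j = (if \<exists>t<L. (h^^t) i = j then
      lam ^ (THE t. t<L \<and> (h^^t) i = j) * c (THE t. t<L \<and> (h^^t) i = j) else 0)" for j
  have xv: "x ((h^^t) i) = lam^t * c t" if "t < L" for t
  proof -
    have "(THE u. u<L \<and> (h^^u) i = (h^^t) i) = t"
      using that uniq by (intro the_equality) auto
    then show ?thesis using that by (auto simp: x_def)
  qed
  have x0: "x j = 0" if "\<not>(\<exists>t<L. (h^^t) i = j)" for j unfolding x_def using that by (subst if_not_P) auto
  have "x i = 1" using xv[of 0] L by (simp add: c_def)
  moreover have "complex_of_real (w j) * x (h j) = lam * x j" if j: "j < n" for j
  proof (cases "\<exists>t<L. (h^^t) i = j")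
    case True
    then obtain t where t: "t < L" "(h^^t) i = j" by auto
    have hj: "h j = (h^^Suc t) i" using t by simp
    have wj: "w j = 1 \<or> w j = -1" using w j by auto
    show ?thesis
    proof (cases "Suc t < L")
      case True
      have "x (h j) = lam^(Suc t) * c (Suc t)" using hj xv[OF True] by simp
      also have "c (Suc t) = c t * complex_of_real (w j)" using t by (simp add: c_def)
      finally have "complex_of_real (w j) * x (h j) = lam^(Suc t) * c t * (complex_of_real (w j) * complex_of_real (w j))"
        by (simp add: algebra_simps)
      also have "complex_of_real (w j) * complex_of_real (w j) = 1" using wj by auto
      finally show ?thesis using xv[OF t(1)] t by (simp add: algebra_simps)
    next
      case False
      hence SL: "Suc t = L" using t by simp
      hence "h j = i" using hj L by simp
      hence "x (h j) = 1" using `x i = 1` by simp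
      moreover have "lam * x j = lam^(Suc t) * c t" using xv[OF t(1)] t by (simp add: algebra_simps)
      hence "lam * x j = lam^L * c t" using SL by simp
      moreover have "lam^L = c t * complex_of_real (w j)"
      proof -
        have e0: "c (Suc t) = c t * complex_of_real (w j)" using t by (simp add: c_def)
        have "lam^L = c L" using lam by (simp add: c_def)
        then show ?thesis using e0 SL by simp
      qed
      ultimately show ?thesis using c2[of t] by (simp add: algebra_simps)
    qed
  next
    case False
    have "\<not>(\<exists>t<L. (h^^t) i = h j)"
    proof
      assume "\<exists>t<L. (h^^t) i = h j"
      then obtain t where t: "t < L" "(h^^t) i = h j" by auto
      show False
      proof (cases t)
        case 0
        have "h ((h^^(L-1)) i) = i" using L by (metis Suc_diff_1 comp_apply funpow.simps(2))
        hence "h ((h^^(L-1)) i) = h j" using t 0 by simp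
        hence "(h^^(L-1)) i = j" using inj orb j by (meson inj_onD lessThan_iff)
        moreover have "L - 1 < L" using L by simp
        ultimately show False using False by blast
      next
        case (Suc u)
        have "h ((h^^u) i) = h j" using t Suc by simp
        hence "(h^^u) i = j" using inj orb j by (meson inj_onD lessThan_iff)
        then show False using False t Suc by auto
      qed
    qed
    then show ?thesis using x0 False by simp
  qed
  ultimately show ?thesis by blast
qed

lemma collapse_sum:
  fixes f :: "nat \<Rightarrow> complex"
  assumes "i < m" "\<forall>j<m. j \<noteq> i \<longrightarrow> f j = 0"
  shows "(\<Sum>j<m. f j) = f i"
proof -
  have "(\<Sum>j<m. f j) = (\<Sum>j<m. if j = i then f i else 0)"
    using assms by (intro sum.cong) auto
  also have "\<dots> = f i" using assms by (simp add: sum.delta)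
  finally show ?thesis .
qed

lemma energy:
  fixes A B D :: "real mat" and v :: "complex vec" and \<omega> :: complex and k :: real
  assumes nz: "\<exists>i<m. v$i \<noteq> 0"
   and eq: "\<forall>i<m. (\<Sum>j<m. ((-\<i>*\<omega>) * of_real (D$$(i,j)) + (\<i>*of_real k) * of_real(A$$(i,j)) - of_real(B$$(i,j))) * v$j) = 0"
   and symA: "\<forall>i<m. \<forall>j<m. A$$(i,j) = A$$(j,i)"
   and Bo: "\<forall>i<m. \<forall>j<m. i \<noteq> j \<longrightarrow> B$$(i,j) + B$$(j,i) = 0"
   and Bd: "\<forall>i<m. B$$(i,i) \<le> 0"
   and Do: "\<forall>i<m. \<forall>j<m. i \<noteq> j \<longrightarrow> D$$(i,j) = 0"
   and Dd: "\<forall>i<m. D$$(i,i) > 0"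
  shows "Im \<omega> \<le> 0"
proof -
  define c where "c i = cnj (v$i)" for i
  define R where "R = (\<Sum>i<m. \<Sum>j<m. c i * of_real(D$$(i,j)) * v$j)"
  define Q where "Q = (\<Sum>i<m. \<Sum>j<m. c i * of_real(A$$(i,j)) * v$j)"
  define Z where "Z = (\<Sum>i<m. \<Sum>j<m. c i * of_real(B$$(i,j)) * v$j)"
  have "(\<Sum>i<m. c i * (\<Sum>j<m. ((-\<i>*\<omega>) * of_real (D$$(i,j)) + (\<i>*of_real k) * of_real(A$$(i,j)) - of_real(B$$(i,j))) * v$j)) = 0"
    using eq by simp
  moreover have "(\<Sum>i<m. c i * (\<Sum>j<m. ((-\<i>*\<omega>) * of_real (D$$(i,j)) + (\<i>*of_real k) * of_real(A$$(i,j)) - of_real(B$$(i,j))) * v$j))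
     = (-\<i>*\<omega>) * R + (\<i>*of_real k) * Q - Z"
  proof -
    have "c i * (\<Sum>j<m. ((-\<i>*\<omega>) * of_real (D$$(i,j)) + (\<i>*of_real k) * of_real(A$$(i,j)) - of_real(B$$(i,j))) * v$j)
      = (-\<i>*\<omega>) * (\<Sum>j<m. c i * of_real(D$$(i,j)) * v$j) + (\<i>*of_real k) * (\<Sum>j<m. c i * of_real(A$$(i,j)) * v$j)
        - (\<Sum>j<m. c i * of_real(B$$(i,j)) * v$j)" for i
      by (simp add: sum_distrib_left sum.distrib sum_subtractf sum_negf algebra_simps)
    then show ?thesis unfolding R_def Q_def Z_def
      by (simp add: sum.distrib sum_subtractf sum_distrib_left)
  qed
  ultimately have S: "(-\<i>*\<omega>) * R + (\<i>*of_real k) * Q - Z = 0" by simp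
  define Rr where "Rr = (\<Sum>i<m. D$$(i,i) * (cmod (v$i))^2)"
  have R: "R = of_real Rr"
  proof -
    have "R = (\<Sum>i<m. c i * of_real(D$$(i,i)) * v$i)"
      unfolding R_def
      by (intro sum.cong refl collapse_sum) (use Do in auto)
    also have "\<dots> = (\<Sum>i<m. of_real (D$$(i,i) * (cmod (v$i))^2))"
      by (intro sum.cong refl) (simp add: c_def algebra_simps flip: complex_norm_square)
    finally show ?thesis unfolding Rr_def by simp
  qed
  have Rpos: "Rr > 0"
  proof -
    obtain i where i: "i < m" "v$i \<noteq> 0" using nz by auto
    show ?thesis unfolding Rr_def
      by (rule sum_pos2[of _ i]) (use i Dd in auto)
  qed
  have "cnj Q = (\<Sum>i<m. \<Sum>j<m. v$i * of_real(A$$(i,j)) * cnj (v$j))"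
    unfolding Q_def c_def by (simp add: cnj_sum)
  also have "\<dots> = (\<Sum>j<m. \<Sum>i<m. v$i * of_real(A$$(i,j)) * cnj (v$j))"
    by (rule sum.swap)
  also have "\<dots> = Q"
    unfolding Q_def c_def
    by (intro sum.cong refl) (use symA in \<open>auto simp: algebra_simps\<close>)
  finally have "cnj Q = Q" .
  hence ImQ: "Im Q = 0" by (metis complex_cnj_cancel_iff complex_cnj_zero_iff  cnj.simps(2) neg_equal_zero)
  have "cnj Z = (\<Sum>i<m. \<Sum>j<m. v$i * of_real(B$$(i,j)) * cnj (v$j))"
    unfolding Z_def c_def by (simp add: cnj_sum)
  also have "\<dots> = (\<Sum>j<m. \<Sum>i<m. v$i * of_real(B$$(i,j)) * cnj (v$j))"
    by (rule sum.swap)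
  also have "\<dots> = (\<Sum>i<m. \<Sum>j<m. c i * of_real(B$$(j,i)) * v$j)"
    unfolding c_def by (intro sum.cong refl) (auto simp: algebra_simps)
  finally have cZ: "cnj Z = (\<Sum>i<m. \<Sum>j<m. c i * of_real(B$$(j,i)) * v$j)" .
  have "Z + cnj Z = (\<Sum>i<m. \<Sum>j<m. c i * of_real(B$$(i,j) + B$$(j,i)) * v$j)"
  proof -
    have "Z + cnj Z = Z + (\<Sum>i<m. \<Sum>j<m. c i * of_real(B$$(j,i)) * v$j)" using cZ by simp
    also have "\<dots> = (\<Sum>i<m. \<Sum>j<m. c i * of_real(B$$(i,j) + B$$(j,i)) * v$j)"
      unfolding Z_def by (simp add: sum.distrib[symmetric] algebra_simps)
    finally show ?thesis .
  qed
  also have "\<dots> = (\<Sum>i<m. c i * of_real(B$$(i,i) + B$$(i,i)) * v$i)"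
    by (intro sum.cong refl collapse_sum) (use Bo in auto)
  also have "\<dots> = (\<Sum>i<m. of_real (2 * B$$(i,i) * (cmod (v$i))^2))"
    by (intro sum.cong refl) (simp add: c_def algebra_simps flip: complex_norm_square)
  finally have "Re (Z + cnj Z) = (\<Sum>i<m. 2 * B$$(i,i) * (cmod (v$i))^2)"
    by (simp add: Re_sum)
  also have "\<dots> \<le> 0"
    by (intro sum_nonpos) (use Bd in \<open>auto simp: mult_nonpos_nonneg\<close>)
  finally have ReZ: "Re Z \<le> 0" by simp
  have "Re ((-\<i>*\<omega>) * R + (\<i>*of_real k) * Q - Z) = Im \<omega> * Rr - k * Im Q - Re Z"
    unfolding R by simp
  with S ImQ have "Im \<omega> * Rr = Re Z" by simp
  with ReZ Rpos show ?thesis by (smt (verit) mult_pos_pos)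
qed

lemma neg_char_matrix:
  assumes M: "(M :: complex mat) \<in> carrier_mat n n"
  shows "- (char_matrix M z) = z \<cdot>\<^sub>m 1\<^sub>m n - M"
  by (rule eq_matI) (use M in \<open>auto simp: char_matrix_def\<close>)

lemma prod_list_bound:
  fixes as :: "complex list"
  assumes "\<forall>a\<in>set as. Re a \<le> 0" "Re s > 0"
  shows "(Re s)^length as \<le> cmod (poly (\<Prod>a\<leftarrow>as. [:-a,1:]) s)"
  using assms(1)
proof (induction as)
  case Nil then show ?case by simp
next
  case (Cons a as)
  have "Re s \<le> Re (s - a)" using Cons.prems by simp
  also have "\<dots> \<le> cmod (s - a)" by (rule complex_Re_le_cmod)
  finally have 1: "Re s \<le> cmod (s - a)" .
  have 2: "(Re s)^length as \<le> cmod (poly (\<Prod>a\<leftarrow>as. [:-a,1:]) s)" using Cons by auto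
  have "(Re s)^length (a#as) = Re s * (Re s)^length as" by simp
  also have "\<dots> \<le> cmod (s - a) * cmod (poly (\<Prod>a\<leftarrow>as. [:-a,1:]) s)"
    by (rule mult_mono[OF 1 2]) (use assms(2) in auto)
  also have "\<dots> = cmod ((s - a) * poly (\<Prod>a\<leftarrow>as. [:-a,1:]) s)"
    by (simp only: norm_mult)
  also have "\<dots> = cmod (poly (\<Prod>a\<leftarrow>a#as. [:-a,1:]) s)"
    by (simp add: algebra_simps)
  finally show ?case .
qed

lemma det_lower_bound:
  fixes M :: "complex mat"
  assumes M: "M \<in> carrier_mat n n" and roots: "\<forall>z. det (z \<cdot>\<^sub>m 1\<^sub>m n - M) = 0 \<longrightarrow> Re z \<le> 0"
    and s: "Re s > 0"
  shows "(Re s)^n \<le> cmod (det (s \<cdot>\<^sub>m 1\<^sub>m n - M))"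
proof -
  obtain as where cp: "char_poly M = (\<Prod>a\<leftarrow>as. [:-a,1:])" "length as = n"
    using char_poly_factorized[OF M] by auto
  have pe: "poly (char_poly M) z = det (z \<cdot>\<^sub>m 1\<^sub>m n - M)" for z
    using char_poly_matrix[OF M] neg_char_matrix[OF M] by simp
  have "\<forall>a\<in>set as. Re a \<le> 0"
  proof
    fix a assume a: "a \<in> set as"
    have "poly (\<Prod>a\<leftarrow>as. [:-a,1:]) a = 0"
      using a by (auto simp: poly_prod_list_zero_iff)
    hence "det (a \<cdot>\<^sub>m 1\<^sub>m n - M) = 0" using pe[of a] cp by simp
    thus "Re a \<le> 0" using roots by auto
  qed
  from prod_list_bound[OF this s] show ?thesis using pe[of s] cp by simp
qed

lemma det_cont:
  fixes X Y :: "complex mat"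
  assumes X: "X \<in> carrier_mat n n" and Y: "Y \<in> carrier_mat n n"
  shows "((\<lambda>e. det (X + e \<cdot>\<^sub>m Y)) \<longlongrightarrow> det X) (at 0)"
proof -
  have eq: "det (X + e \<cdot>\<^sub>m Y) = (\<Sum>p\<in>{p. p permutes {0..<n}}. signof p * (\<Prod>i=0..<n. X$$(i,p i) + e * Y$$(i,p i)))" for e
  proof -
    have "X + e \<cdot>\<^sub>m Y \<in> carrier_mat n n" using X Y by auto
    from det_def'[OF this] show ?thesis
      apply simp
      apply (intro sum.cong refl arg_cong[where f="\<lambda>x. _ * x"] prod.cong)
      using X Y by (auto simp: permutes_in_image)
  qed
  have lim: "((\<lambda>e. (\<Sum>p\<in>{p. p permutes {0..<n}}. signof p * (\<Prod>i=0..<n. X$$(i,p i) + e * Y$$(i,p i))))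
     \<longlongrightarrow> (\<Sum>p\<in>{p. p permutes {0..<n}}. signof p * (\<Prod>i=0..<n. X$$(i,p i) + 0 * Y$$(i,p i)))) (at 0)"
    by (intro tendsto_intros)
  have "(\<Sum>p\<in>{p. p permutes {0..<n}}. signof p * (\<Prod>i=0..<n. X$$(i,p i) + 0 * Y$$(i,p i))) = det X"
    using det_def'[OF X] by simp
  with lim show ?thesis unfolding eq by simp
qed

lemma sp_struct:
  assumes sp: "signed_perm_mat n P"
  shows "\<exists>h w. (\<forall>r<n. h r < n) \<and> inj_on h {..<n} \<and> (\<forall>r<n. w r = 1 \<or> w r = -1)
     \<and> (\<forall>r<n. \<forall>c<n. P$$(r,c) = (if c = h r then w r else 0))"
proof -
  have ent: "\<forall>i<n. \<forall>j<n. P $$ (i, j) \<in> {-1, 0, 1}"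
   and row: "\<forall>i<n. \<exists>!j. j < n \<and> P $$ (i, j) \<noteq> 0"
   and col: "\<forall>j<n. \<exists>!i. i < n \<and> P $$ (i, j) \<noteq> 0"
    using sp unfolding signed_perm_mat_def by auto
  define h where "h r = (THE j. j < n \<and> P $$ (r, j) \<noteq> 0)" for r
  define w where "w r = P $$ (r, h r)" for r
  have h1: "h r < n \<and> P $$ (r, h r) \<noteq> 0" if "r < n" for r
    unfolding h_def using theI'[OF row[rule_format, OF that]] .
  have h2: "j = h r" if "r < n" "j < n" "P $$ (r, j) \<noteq> 0" for r j
    unfolding h_def using the1_equality[OF row[rule_format, OF that(1)]] that by auto
  have "\<forall>r<n. h r < n" using h1 by auto
  moreover have "inj_on h {..<n}"
  proof (rule inj_onI)
    fix r1 r2 assume r: "r1 \<in> {..<n}" "r2 \<in> {..<n}" "h r1 = h r2"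
    have "h r1 < n" using h1 r by auto
    from col[rule_format, OF this] show "r1 = r2" using h1 r by (metis lessThan_iff)
  qed
  moreover have "\<forall>r<n. w r = 1 \<or> w r = -1"
    using h1 ent unfolding w_def by fastforce
  moreover have "\<forall>r<n. \<forall>c<n. P$$(r,c) = (if c = h r then w r else 0)"
    using h2 unfolding w_def by auto
  ultimately show ?thesis by blast
qed

lemma disp_carrier: "dispersion_mat m \<sigma>0 P \<tau> k \<omega> \<in> carrier_mat m m"
  unfolding dispersion_mat_def sysD_def sysA_def sysB_def by auto

lemma disp_entry:
  assumes "i < m" "j < m"
  shows "dispersion_mat m \<sigma>0 P \<tau> k \<omega> $$ (i,j) =
    (-\<i>*\<omega>) * of_real (sysD m \<tau> $$ (i,j)) + (\<i>*of_real k) * of_real(sysA m \<sigma>0 P $$(i,j)) - of_real(sysB m P $$ (i,j))"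
  using assms unfolding dispersion_mat_def sysD_def sysA_def sysB_def by simp

lemma mult_vec_entry:
  assumes "M \<in> carrier_mat m m" "v \<in> carrier_vec m" "i < m"
  shows "(M *\<^sub>v v) $ i = (\<Sum>j<m. M $$ (i,j) * v $ j)"
  using assms by (auto simp: scalar_prod_def atLeast0LessThan intro!: sum.cong)

lemma sysD_entry: "i < m \<Longrightarrow> j < m \<Longrightarrow> sysD m \<tau> $$ (i,j) = (if i \<noteq> j then 0 else if i = 0 then 1 else \<tau>)"
  unfolding sysD_def by simp
lemma sysA_entry: "i < m \<Longrightarrow> j < m \<Longrightarrow> sysA m \<sigma>0 P $$ (i,j) = (if i = 0 then (if j = m - 1 then \<sigma>0 else 0)
     else (if j = m - 1 then 0 else P $$ (i - 1, j)))"
  unfolding sysA_def by simp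
lemma sysB_entry: "i < m \<Longrightarrow> j < m \<Longrightarrow> sysB m P $$ (i,j) = (if i = 0 \<or> j = 0 then 0 else P $$ (i - 1, j - 1))"
  unfolding sysB_def by simp

lemma unstable_P:
  assumes m: "m = Suc n"
    and hP: "\<forall>r<n. \<forall>c<n. P$$(r,c) = (if c = h r then w r else 0)" and hn: "\<forall>r<n. h r < n"
    and r0: "r0 < n" "x r0 = 1"
    and eig: "\<forall>j<n. complex_of_real (w j) * x (h j) = lam * x j" and re: "Re lam > 0"
  shows "\<not> stable_system m \<sigma>0 P"
proof
  assume st: "stable_system m \<sigma>0 P"
  define \<omega> where "\<omega> = \<i> * lam"
  define M where "M = dispersion_mat m \<sigma>0 P 1 0 \<omega>"
  define v where "v = vec m (\<lambda>i. if i = 0 then 0 else x (i - 1))"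
  have Mc: "M \<in> carrier_mat m m" unfolding M_def by (rule disp_carrier)
  have vc: "v \<in> carrier_vec m" unfolding v_def by simp
  have "v \<noteq> 0\<^sub>v m"
  proof
    assume "v = 0\<^sub>v m"
    hence "v $ Suc r0 = 0" using r0 m by simp
    thus False using r0 m by (simp add: v_def)
  qed
  moreover have "M *\<^sub>v v = 0\<^sub>v m"
  proof (rule eq_vecI)
    fix i assume i: "i < dim_vec (0\<^sub>v m :: complex vec)"
    hence i: "i < m" by simp
    have "(M *\<^sub>v v) $ i = (\<Sum>j<m. M $$ (i,j) * v $ j)" by (rule mult_vec_entry[OF Mc vc i])
    also have "\<dots> = (\<Sum>j<m. (if i = j then lam * v $ j else 0) - of_real (sysB m P $$ (i,j)) * v $ j)"
      unfolding M_def
      by (intro sum.cong refl) (use i in \<open>auto simp: disp_entry sysD_entry \<omega>_def algebra_simps\<close>)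
    also have "\<dots> = lam * v $ i - (\<Sum>j<m. of_real (sysB m P $$ (i,j)) * v $ j)"
      using i by (simp add: sum_subtractf sum.delta)
    also have "\<dots> = 0"
    proof (cases i)
      case 0
      then show ?thesis using i by (simp add: sysB_entry v_def)
    next
      case (Suc r)
      have r: "r < n" using i Suc m by simp
      have "(\<Sum>j<m. of_real (sysB m P $$ (i,j)) * v $ j) = (\<Sum>c<n. of_real (P $$ (r,c)) * x c)"
        unfolding m sum.lessThan_Suc_shift using Suc m i by (simp add: sysB_entry v_def)
      also have "\<dots> = (\<Sum>c<n. if c = h r then of_real (w r) * x c else 0)"
        by (intro sum.cong refl) (use hP r in auto)
      also have "\<dots> = of_real (w r) * x (h r)" using hn r by (simp add: sum.delta')
      finally show ?thesis using eig r Suc i m by (simp add: v_def)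
    qed
    finally show "(M *\<^sub>v v) $ i = 0\<^sub>v m $ i" using i by simp
  next
    show "dim_vec (M *\<^sub>v v) = dim_vec (0\<^sub>v m :: complex vec)" using Mc by simp
  qed
  ultimately have "det M = 0" using det_0_iff_vec_prod_zero[OF Mc] vc by blast
  hence "Im \<omega> \<le> 0" using st[unfolded stable_system_def, rule_format, of 1 0 \<omega>] unfolding M_def by simp
  thus False using re by (simp add: \<omega>_def)
qed

lemma sys_dims[simp]: "dim_row (sysA m \<sigma>0 P) = m" "dim_col (sysA m \<sigma>0 P) = m"
  "dim_row (sysB m P) = m" "dim_col (sysB m P) = m" "dim_row (sysD m \<tau>) = m" "dim_col (sysD m \<tau>) = m"
  unfolding sysA_def sysB_def sysD_def by simp_all

lemma disp_dims[simp]: "dim_row (dispersion_mat m \<sigma>0 P \<tau> k \<omega>) = m" "dim_col (dispersion_mat m \<sigma>0 P \<tau> k \<omega>) = m"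
  unfolding dispersion_mat_def by simp_all

lemma unstable_A:
  assumes m: "m = Suc n"
    and Ag: "\<forall>i<m. \<forall>j<m. sysA m \<sigma>0 P $$ (i,j) = (if j = g i then wg i else 0)" and gm: "\<forall>i<m. g i < m"
    and i0: "i0 < m" "y i0 = 1"
    and eig: "\<forall>i<m. complex_of_real (wg i) * y (g i) = \<mu> * y i" and im: "Im \<mu> \<noteq> 0"
  shows "\<not> stable_system m \<sigma>0 P"
proof
  assume st: "stable_system m \<sigma>0 P"
  define Ac where "Ac = map_mat complex_of_real (sysA m \<sigma>0 P)"
  define Bc where "Bc = map_mat complex_of_real (sysB m P)"
  have Acc: "Ac \<in> carrier_mat m m" unfolding Ac_def sysA_def by simp
  have Bcc: "Bc \<in> carrier_mat m m" unfolding Bc_def sysB_def by simp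
  have Ae: "Ac $$ (i,j) = (if j = g i then of_real (wg i) else 0)" if "i<m" "j<m" for i j
    using that Ag by (simp add: Ac_def)
  define X where "X = Ac - \<mu> \<cdot>\<^sub>m 1\<^sub>m m"
  have Xc: "X \<in> carrier_mat m m" unfolding X_def by (intro minus_carrier_mat) simp
  define v where "v = vec m y"
  have vc: "v \<in> carrier_vec m" unfolding v_def by simp
  have detX: "det X = 0"
  proof -
    have "v \<noteq> 0\<^sub>v m"
    proof
      assume "v = 0\<^sub>v m"
      hence "v $ i0 = 0" using i0 by simp
      thus False using i0 by (simp add: v_def)
    qed
    moreover have "X *\<^sub>v v = 0\<^sub>v m"
    proof (rule eq_vecI)
      fix i assume i: "i < dim_vec (0\<^sub>v m :: complex vec)"
      hence i: "i < m" by simp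
      have "(X *\<^sub>v v) $ i = (\<Sum>j<m. X $$ (i,j) * v $ j)" by (rule mult_vec_entry[OF Xc vc i])
      also have "\<dots> = (\<Sum>j<m. (if j = g i then of_real (wg i) * y j else 0) - (if i = j then \<mu> * y j else 0))"
        unfolding X_def v_def
        by (intro sum.cong refl) (use i Acc in \<open>auto simp: Ae algebra_simps\<close>)
      also have "\<dots> = of_real (wg i) * y (g i) - \<mu> * y i"
        using i gm by (simp add: sum_subtractf sum.delta sum.delta')
      finally show "(X *\<^sub>v v) $ i = 0\<^sub>v m $ i" using i eig by simp
    next
      show "dim_vec (X *\<^sub>v v) = dim_vec (0\<^sub>v m :: complex vec)" using Xc by simp
    qed
    ultimately show ?thesis using det_0_iff_vec_prod_zero[OF Xc] vc by blast
  qed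
  define Mk where "Mk k = Bc - (\<i> * of_real k) \<cdot>\<^sub>m Ac" for k :: real
  have Mkc: "Mk k \<in> carrier_mat m m" for k unfolding Mk_def using Acc by (intro minus_carrier_mat) simp
  have D1: "dispersion_mat m \<sigma>0 P 1 k (\<i>*z) = z \<cdot>\<^sub>m 1\<^sub>m m - Mk k" for k z
  proof (rule eq_matI)
    fix i j assume "i < dim_row (z \<cdot>\<^sub>m 1\<^sub>m m - Mk k)" "j < dim_col (z \<cdot>\<^sub>m 1\<^sub>m m - Mk k)"
    hence i: "i < m" "j < m" using Mkc[of k] by auto
    have "dispersion_mat m \<sigma>0 P 1 k (\<i>*z) $$ (i,j) = z * (if i = j then 1 else 0) + (\<i> * of_real k) * Ac $$ (i,j) - Bc $$ (i,j)"
      using i by (simp add: disp_entry sysD_entry Ac_def Bc_def)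
    moreover have "(z \<cdot>\<^sub>m 1\<^sub>m m - Mk k) $$ (i,j) = z * (if i = j then 1 else 0) - (Bc $$ (i,j) - (\<i> * of_real k) * Ac $$ (i,j))"
      using i Acc Bcc by (simp add: Mk_def)
    moreover have "z * (if i = j then 1 else 0) - (Bc $$ (i,j) - (\<i> * of_real k) * Ac $$ (i,j))
       = z * (if i = j then 1 else 0) + (\<i> * of_real k) * Ac $$ (i,j) - Bc $$ (i,j)"
      by (simp add: algebra_simps)
    ultimately show "dispersion_mat m \<sigma>0 P 1 k (\<i>*z) $$ (i,j) = (z \<cdot>\<^sub>m 1\<^sub>m m - Mk k) $$ (i,j)"
      by metis
  qed (use Mkc[of k] in auto)
  have roots: "\<forall>z. det (z \<cdot>\<^sub>m 1\<^sub>m m - Mk k) = 0 \<longrightarrow> Re z \<le> 0" for k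
  proof (intro allI impI)
    fix z assume "det (z \<cdot>\<^sub>m 1\<^sub>m m - Mk k) = 0"
    hence "det (dispersion_mat m \<sigma>0 P 1 k (\<i>*z)) = 0" using D1 by simp
    hence "Im (\<i>*z) \<le> 0" using st[unfolded stable_system_def, rule_format, of 1 k "\<i>*z"] by simp
    thus "Re z \<le> 0" by simp
  qed
  define b where "b = Im \<mu>"
  have key: "\<bar>b\<bar>^m \<le> cmod (det (X + (\<i> / of_real k) \<cdot>\<^sub>m Bc))" if k: "k * b > 0" for k
  proof -
    have k0: "k \<noteq> 0" using k by auto
    define s where "s = - \<i> * of_real k * \<mu>"
    have Res: "Re s = k * b" unfolding s_def b_def by simp
    have D2: "s \<cdot>\<^sub>m 1\<^sub>m m - Mk k = (\<i> * of_real k) \<cdot>\<^sub>m (X + (\<i> / of_real k) \<cdot>\<^sub>m Bc)"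
    proof (rule eq_matI)
      fix i j assume "i < dim_row ((\<i> * of_real k) \<cdot>\<^sub>m (X + (\<i> / of_real k) \<cdot>\<^sub>m Bc))"
        "j < dim_col ((\<i> * of_real k) \<cdot>\<^sub>m (X + (\<i> / of_real k) \<cdot>\<^sub>m Bc))"
      hence i: "i < m" "j < m" using Xc Bcc by auto
      have "(s \<cdot>\<^sub>m 1\<^sub>m m - Mk k) $$ (i,j) = s * (if i = j then 1 else 0) - (Bc $$ (i,j) - (\<i> * of_real k) * Ac $$ (i,j))"
        using i Acc Bcc by (simp add: Mk_def)
      moreover have "((\<i> * of_real k) \<cdot>\<^sub>m (X + (\<i> / of_real k) \<cdot>\<^sub>m Bc)) $$ (i,j)
          = (\<i> * of_real k) * (Ac $$ (i,j) - \<mu> * (if i = j then 1 else 0) + (\<i> / of_real k) * Bc $$ (i,j))"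
        using i Acc Bcc by (simp add: X_def)
      moreover have "s * (if i = j then 1 else 0) - (Bc $$ (i,j) - (\<i> * of_real k) * Ac $$ (i,j))
          = (\<i> * of_real k) * (Ac $$ (i,j) - \<mu> * (if i = j then 1 else 0) + (\<i> / of_real k) * Bc $$ (i,j))"
        using k0 by (cases "i = j") (simp_all add: s_def field_simps)
      ultimately show "(s \<cdot>\<^sub>m 1\<^sub>m m - Mk k) $$ (i,j) = ((\<i> * of_real k) \<cdot>\<^sub>m (X + (\<i> / of_real k) \<cdot>\<^sub>m Bc)) $$ (i,j)"
        by simp
    qed (use Mkc[of k] Xc Bcc in auto)
    have "(k*b)^m \<le> cmod (det (s \<cdot>\<^sub>m 1\<^sub>m m - Mk k))"
      using det_lower_bound[OF Mkc roots, of s] Res k by simp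
    also have "\<dots> = \<bar>k\<bar>^m * cmod (det (X + (\<i> / of_real k) \<cdot>\<^sub>m Bc))"
      unfolding D2 det_smult using Xc Bcc by (simp add: norm_mult norm_power)
    finally have "(k*b)^m \<le> \<bar>k\<bar>^m * cmod (det (X + (\<i> / of_real k) \<cdot>\<^sub>m Bc))" .
    moreover have "(k*b)^m = \<bar>k\<bar>^m * \<bar>b\<bar>^m"
    proof -
      have "k*b = \<bar>k\<bar> * \<bar>b\<bar>" using k by (simp flip: abs_mult)
      thus ?thesis by (simp add: power_mult_distrib)
    qed
    moreover have kp: "\<bar>k\<bar>^m > 0" using k0 by simp
    ultimately have "\<bar>k\<bar>^m * \<bar>b\<bar>^m \<le> \<bar>k\<bar>^m * cmod (det (X + (\<i> / of_real k) \<cdot>\<^sub>m Bc))" by simp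
    thus ?thesis using kp by (rule mult_left_le_imp_le)
  qed
  have bpos: "\<bar>b\<bar>^m > 0" using im b_def by simp
  have lim: "((\<lambda>e. det (X + e \<cdot>\<^sub>m Bc)) \<longlongrightarrow> 0) (at 0)"
    using det_cont[OF Xc Bcc] detX by simp
  then have "eventually (\<lambda>e. dist (det (X + e \<cdot>\<^sub>m Bc)) 0 < \<bar>b\<bar>^m) (at 0)"
    using bpos unfolding tendsto_iff by blast
  then obtain d where d: "d > 0" "\<forall>e. e \<noteq> 0 \<and> dist e 0 < d \<longrightarrow> cmod (det (X + e \<cdot>\<^sub>m Bc)) < \<bar>b\<bar>^m"
    unfolding eventually_at by auto
  define k where "k = sgn b * (2 / d)"
  have kb: "k * b > 0" unfolding k_def using im b_def d by (simp add: sgn_if)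
  have "\<bar>k\<bar> = 2 / d" unfolding k_def using im b_def d by (simp add: sgn_if abs_mult)
  hence ek: "cmod (\<i> / of_real k) = d / 2" using d by (simp add: norm_divide)
  have "cmod (det (X + (\<i> / of_real k) \<cdot>\<^sub>m Bc)) < \<bar>b\<bar>^m"
    using d(2)[rule_format, of "\<i> / of_real k"] ek d kb by auto
  with key[OF kb] show False by simp
qed

lemma exists_period:
  fixes h :: "nat \<Rightarrow> nat"
  assumes hn: "\<forall>j<n. h j < n" and inj: "inj_on h {..<n}" and i: "i < n"
  shows "\<exists>p>0. (h^^p) i = i"
proof -
  have "\<not> inj_on (\<lambda>t. (h^^t) i) {..n}"
  proof
    assume "inj_on (\<lambda>t. (h^^t) i) {..n}"
    hence "card ((\<lambda>t. (h^^t) i) ` {..n}) = card {..n}" by (rule card_image)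
    moreover have "(\<lambda>t. (h^^t) i) ` {..n} \<subseteq> {..<n}" using funpow_in[OF hn i] by auto
    hence "card ((\<lambda>t. (h^^t) i) ` {..n}) \<le> n" by (metis card_lessThan card_mono finite_lessThan)
    ultimately show False by simp
  qed
  then obtain s t where st: "s \<noteq> t" "(h^^s) i = (h^^t) i" unfolding inj_on_def by auto
  have "\<exists>a b. a < b \<and> (h^^a) i = (h^^b) i"
    using st by (metis linorder_neqE_nat)
  then obtain a b where ab: "a < b" "(h^^a) i = (h^^b) i" by blast
  have himg: "h ` {..<n} \<subseteq> {..<n}" using hn by auto
  have "(h^^b) i = (h^^a) ((h^^(b-a)) i)"
    using ab by (metis funpow_add le_add_diff_inverse less_imp_le comp_apply)
  hence "(h^^a) ((h^^(b-a)) i) = (h^^a) i" using ab by simp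
  moreover have "inj_on (h^^a) {..<n}" by (rule inj_on_funpow[OF inj himg])
  ultimately have "(h^^(b-a)) i = i" using funpow_in[OF hn i] i by (meson inj_onD lessThan_iff)
  thus ?thesis using ab by (intro exI[of _ "b-a"]) auto
qed

lemma min_period:
  fixes h :: "nat \<Rightarrow> nat"
  assumes hn: "\<forall>j<n. h j < n" and inj: "inj_on h {..<n}" and i: "i < n"
  shows "\<exists>L>0. (h^^L) i = i \<and> (\<forall>t. 0 < t \<and> t < L \<longrightarrow> (h^^t) i \<noteq> i)"
proof -
  define L where "L = (LEAST p. 0 < p \<and> (h^^p) i = i)"
  have ex: "\<exists>p. 0 < p \<and> (h^^p) i = i" using exists_period[OF hn inj i] by auto
  have "0 < L \<and> (h^^L) i = i" unfolding L_def by (rule LeastI_ex[OF ex])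
  moreover have "\<forall>t. 0 < t \<and> t < L \<longrightarrow> (h^^t) i \<noteq> i"
    unfolding L_def using not_less_Least by blast
  ultimately show ?thesis by blast
qed

lemma prod_pm:
  fixes L :: nat and f :: "nat \<Rightarrow> nat" and w :: "nat \<Rightarrow> real"
  assumes "\<forall>t<L. w (f t) = 1 \<or> w (f t) = -1"
  shows "(\<Prod>t<L. complex_of_real (w (f t))) = 1 \<or> (\<Prod>t<L. complex_of_real (w (f t))) = -1"
  using assms
proof (induction L)
  case 0 then show ?case by simp
next
  case (Suc L)
  hence IH: "(\<Prod>t<L. complex_of_real (w (f t))) = 1 \<or> (\<Prod>t<L. complex_of_real (w (f t))) = -1" by auto
  have "w (f L) = 1 \<or> w (f L) = -1" using Suc.prems by auto
  then show ?case using IH by (auto simp: prod.lessThan_Suc)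
qed

lemma lam_re:
  assumes L: "L \<ge> 3" and c: "c = 1 \<or> c = (-1::complex)"
  shows "\<exists>lam. lam^L = c \<and> Re lam > 0"
proof (cases "c = 1")
  case True then show ?thesis by (intro exI[of _ 1]) auto
next
  case False
  hence c: "c = -1" using c by auto
  have "cis (pi / real L) ^ L = cis (real L * (pi / real L))" by (rule DeMoivre)
  also have "real L * (pi / real L) = pi" using L by simp
  finally have 1: "cis (pi / real L) ^ L = -1" by simp
  have "pi / real L \<le> pi / 3" using L by (intro divide_left_mono) auto
  hence "pi / real L < pi / 2" using pi_gt_zero by linarith
  moreover have "pi / real L > 0" using L by simp
  ultimately have "cos (pi / real L) > 0" by (intro cos_gt_zero_pi) auto
  then show ?thesis using 1 c by (intro exI[of _ "cis (pi / real L)"]) auto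
qed

lemma lam_im:
  assumes L: "L \<ge> 3" and c: "c = 1 \<or> c = (-1::complex)"
  shows "\<exists>lam. lam^L = c \<and> Im lam \<noteq> 0"
proof -
  define a where "a = (if c = 1 then 2 * pi / real L else pi / real L)"
  have "cis a ^ L = cis (real L * a)" by (rule DeMoivre)
  also have "\<dots> = c" using L c by (auto simp: a_def)
  finally have 1: "cis a ^ L = c" .
  have "a > 0" using L by (auto simp: a_def)
  moreover have "a < pi"
  proof -
    have f1: "2 * pi / real L \<le> 2 * pi / 3" using L by (intro divide_left_mono) auto
    have f2: "pi / real L \<le> pi / 3" using L by (intro divide_left_mono) auto
    have f3: "2 * pi / 3 < pi" "pi / 3 < pi" using pi_gt_zero by auto
    show ?thesis
    proof (cases "c = 1")
      case True
      hence "a = 2 * pi / real L" by (simp add: a_def)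
      thus ?thesis using f1 f2 f3 by linarith
    next
      case False
      hence "a = pi / real L" by (simp add: a_def)
      thus ?thesis using f1 f2 f3 by linarith
    qed
  qed
  ultimately have "sin a > 0" by (intro sin_gt_zero)
  then show ?thesis using 1 by (intro exI[of _ "cis a"]) auto
qed

lemma cyc_conditions:
  fixes G :: "complex \<Rightarrow> bool" and badc :: complex and h :: "nat \<Rightarrow> nat" and w :: "nat \<Rightarrow> real"
  assumes hn: "\<forall>j<n. h j < n" and inj: "inj_on h {..<n}" and w: "\<forall>j<n. w j = 1 \<or> w j = -1"
   and noeig: "\<And>i lam x. i < n \<Longrightarrow> x i = 1 \<Longrightarrow> (\<forall>j<n. complex_of_real (w j) * x (h j) = lam * x j) \<Longrightarrow> G lam \<Longrightarrow> False"
   and lam3: "\<And>L (c::complex). L \<ge> 3 \<Longrightarrow> c = 1 \<or> c = -1 \<Longrightarrow> \<exists>lam. lam^L = c \<and> G lam"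
   and lam2: "\<exists>lam. lam^2 = badc \<and> G lam"
   and i: "i < n"
  shows "h (h i) = i \<and> (h i \<noteq> i \<longrightarrow> complex_of_real (w i) * complex_of_real (w (h i)) \<noteq> badc)"
proof -
  obtain L where L: "L > 0" "(h^^L) i = i" "\<forall>t. 0 < t \<and> t < L \<longrightarrow> (h^^t) i \<noteq> i"
    using min_period[OF hn inj i] by blast
  have wt: "\<forall>t<L. w ((h^^t) i) = 1 \<or> w ((h^^t) i) = -1" using w funpow_in[OF hn i] by auto
  have hh: "h (h i) = i"
  proof (rule ccontr)
    assume nh: "h (h i) \<noteq> i"
    have "L \<noteq> 1" using L nh by (metis One_nat_def comp_id funpow.simps(2) funpow_0 o_apply)
    moreover have "L \<noteq> 2" using L nh by (metis funpow_0 funpow_Suc_right numeral_2_eq_2 comp_apply funpow.simps(2))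
    ultimately have L3: "L \<ge> 3" using L by linarith
    obtain lam where lam: "lam^L = (\<Prod>t<L. complex_of_real (w ((h^^t) i)))" "G lam"
      using lam3[OF L3 prod_pm[of L w "\<lambda>t. (h^^t) i", OF wt]] by blast
    obtain x where "x i = 1" "\<forall>j<n. complex_of_real (w j) * x (h j) = lam * x j"
      using cycle_eigen[OF hn inj w i L(1) L(2) L(3) lam(1)] by blast
    then show False using noeig i lam(2) by blast
  qed
  moreover have "complex_of_real (w i) * complex_of_real (w (h i)) \<noteq> badc" if hi: "h i \<noteq> i"
  proof
    assume bad: "complex_of_real (w i) * complex_of_real (w (h i)) = badc"
    obtain lam where lam: "lam^2 = badc" "G lam" using lam2 by blast
    have P2: "(h^^2) i = i" using hh by (simp add: numeral_2_eq_2)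
    have m2: "\<forall>t. 0 < t \<and> t < 2 \<longrightarrow> (h^^t) i \<noteq> i" using hi
    proof (intro allI impI)
      fix t :: nat assume "0 < t \<and> t < 2"
      hence "t = 1" by auto
      thus "(h^^t) i \<noteq> i" using hi by simp
    qed
    have "lam^2 = (\<Prod>t<2. complex_of_real (w ((h^^t) i)))"
      using lam bad by (simp add: numeral_2_eq_2)
    then obtain x where "x i = 1" "\<forall>j<n. complex_of_real (w j) * x (h j) = lam * x j"
      using cycle_eigen[OF hn inj w i _ P2 m2] by auto
    then show False using noeig i lam(2) by blast
  qed
  ultimately show ?thesis by blast
qed

definition Tv :: "nat \<Rightarrow> real \<Rightarrow> nat \<Rightarrow> real" where
  "Tv m \<sigma>0 j = (if 2 * j \<le> m then \<sigma>0 * (-1) ^ (j - 1) else \<sigma>0 * (-1) ^ (m - j))"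

lemma pstar_T: "pstar_entry m \<sigma>0 a b = (if a + b \<noteq> m then 0 else Tv m \<sigma>0 b)"
  unfolding pstar_entry_def Tv_def by simp

lemma Pstar_entry:
  assumes "r < m - 1" "c < m - 1"
  shows "Pstar m \<sigma>0 $$ (r,c) = (if r + c + 2 \<noteq> m then 0 else Tv m \<sigma>0 (c+1))"
  using assms unfolding Pstar_def by (simp add: pstar_T)

lemma Pstar_carrier: "Pstar m \<sigma>0 \<in> carrier_mat (m-1) (m-1)"
  unfolding Pstar_def by simp

lemma T_sym:
  assumes "a + b = m + 1" "a \<ge> 2" "b \<ge> 2"
  shows "Tv m \<sigma>0 a = Tv m \<sigma>0 b"
proof -
  { fix a b assume ab: "a + b = m + 1" "a \<ge> 2" "b \<ge> 2" "2 * a \<le> m"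
    hence "\<not> 2 * b \<le> m" by linarith
    moreover have "m - b = a - 1" using ab by linarith
    ultimately have "Tv m \<sigma>0 a = Tv m \<sigma>0 b" using ab unfolding Tv_def by simp }
  note * = this
  show ?thesis
  proof (cases "2 * a \<le> m")
    case True then show ?thesis using * assms by blast
  next
    case False
    show ?thesis
    proof (cases "2 * b \<le> m")
      case True then show ?thesis using *[of b a] assms by simp
    next
      case False
      with \<open>\<not> 2 * a \<le> m\<close> assms have "a = b" by linarith
      then show ?thesis by simp
    qed
  qed
qed

lemma T_anti:
  assumes "a + b = m" "a \<noteq> b" "a \<ge> 1" "b \<ge> 1"
  shows "Tv m \<sigma>0 a + Tv m \<sigma>0 b = 0"
proof -
  { fix a b assume ab: "a + b = m" "a \<ge> 1" "b \<ge> 1" "2 * a < m"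
    hence "\<not> 2 * b \<le> m" by linarith
    moreover have "m - b = a" using ab by linarith
    moreover obtain a' where "a = Suc a'" using ab by (cases a) auto
    ultimately have "Tv m \<sigma>0 a + Tv m \<sigma>0 b = 0" using ab unfolding Tv_def by simp }
  note * = this
  show ?thesis
  proof (cases "2 * a < m")
    case True then show ?thesis using * assms by blast
  next
    case False
    hence "2 * b < m" using assms by linarith
    then show ?thesis using *[of b a] assms by (simp add: add.commute)
  qed
qed

lemma T_step:
  assumes "j \<ge> 1" "j < m"
  shows "Tv m \<sigma>0 (j+1) = (if 2 * j = m then Tv m \<sigma>0 j else - Tv m \<sigma>0 j)"
proof -
  obtain j' where j: "j = Suc j'" using assms by (cases j) auto
  have "2 * (j+1) \<le> m \<or> 2 * j = m \<or> 2 * j + 1 = m \<or> 2 * j > m" by presburger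
  then consider "2 * (j+1) \<le> m" | "2 * j = m" | "2 * j + 1 = m" | "2 * j > m" by blast
  then show ?thesis
  proof cases
    case 1 then show ?thesis unfolding Tv_def using j by simp
  next
    case 2
    hence "m - (j + 1) = j - 1" by linarith
    then show ?thesis unfolding Tv_def using 2 by simp
  next
    case 3
    hence "m - (j + 1) = j" by linarith
    then show ?thesis unfolding Tv_def using 3 j by simp
  next
    case 4
    obtain k where k: "m - j = Suc k" using assms by (metis Suc_diff_Suc) 
    hence "m - (j+1) = k" by linarith
    then show ?thesis unfolding Tv_def using 4 k by simp
  qed
qed

lemma T_mid:
  assumes "2 * j = m" "\<sigma>0 = (-1) ^ (m div 2)" "j \<ge> 1"
  shows "Tv m \<sigma>0 j = -1"
proof -
  obtain j' where j: "j = Suc j'" using assms by (cases j) auto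
  have "m div 2 = j" using assms by simp
  then show ?thesis unfolding Tv_def using assms j by (simp add: power_add[symmetric])
qed

lemma T1: "m \<ge> 2 \<Longrightarrow> Tv m \<sigma>0 1 = \<sigma>0"
  unfolding Tv_def by simp

lemma stable_Pstar:
  assumes m: "m = Suc n" and n1: "n \<ge> 1"
    and s3: "even m \<Longrightarrow> \<sigma>0 = (-1) ^ (m div 2)"
  shows "stable_system m \<sigma>0 (Pstar m \<sigma>0)"
  unfolding stable_system_def
proof (intro allI impI)
  fix \<tau> :: real and k :: real and \<omega> :: complex
  assume tau: "\<tau> > 0" and dt: "det (dispersion_mat m \<sigma>0 (Pstar m \<sigma>0) \<tau> k \<omega>) = 0"
  let ?P = "Pstar m \<sigma>0"
  let ?M = "dispersion_mat m \<sigma>0 ?P \<tau> k \<omega>"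
  obtain v where v: "v \<in> carrier_vec m" "v \<noteq> 0\<^sub>v m" "?M *\<^sub>v v = 0\<^sub>v m"
    using dt det_0_iff_vec_prod_zero[OF disp_carrier] by blast
  have nz: "\<exists>i<m. v$i \<noteq> 0"
  proof (rule ccontr)
    assume "\<not> (\<exists>i<m. v$i \<noteq> 0)"
    hence "v = 0\<^sub>v m" using v(1) by (intro eq_vecI) auto
    with v(2) show False by simp
  qed
  have eq: "\<forall>i<m. (\<Sum>j<m. ((-\<i>*\<omega>) * of_real (sysD m \<tau> $$(i,j)) + (\<i>*of_real k) * of_real(sysA m \<sigma>0 ?P $$(i,j)) - of_real(sysB m ?P $$(i,j))) * v$j) = 0"
  proof (intro allI impI)
    fix i assume i: "i < m"
    have "(?M *\<^sub>v v) $ i = 0" using v(3) i by simp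
    then show "(\<Sum>j<m. ((-\<i>*\<omega>) * of_real (sysD m \<tau> $$(i,j)) + (\<i>*of_real k) * of_real(sysA m \<sigma>0 ?P $$(i,j)) - of_real(sysB m ?P $$(i,j))) * v$j) = 0"
      using mult_vec_entry[OF disp_carrier v(1) i] i by (simp add: disp_entry)
  qed
  have Achar: "sysA m \<sigma>0 ?P $$ (i,j) = (if i + j = n then (if i = 0 then \<sigma>0 else Tv m \<sigma>0 (j+1)) else 0)"
    if "i < m" "j < m" for i j
  proof -
    have mm: "m - 1 = n" using m by simp
    show ?thesis
    proof (cases "i = 0")
      case True then show ?thesis using that mm by (simp add: sysA_entry)
    next
      case False
      show ?thesis
      proof (cases "j = n")
        case True then show ?thesis using that mm False by (simp add: sysA_entry)
      next
        case False
        hence "j < n" using that m by simp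
        moreover have "i - 1 < n" using that m \<open>i \<noteq> 0\<close> by simp
        ultimately show ?thesis using that mm False \<open>i \<noteq> 0\<close> m
          by (auto simp: sysA_entry Pstar_entry)
      qed
    qed
  qed
  have Bchar: "sysB m ?P $$ (i,j) = (if i = 0 \<or> j = 0 then 0 else if i + j \<noteq> m then 0 else Tv m \<sigma>0 j)"
    if "i < m" "j < m" for i j
  proof (cases "i = 0 \<or> j = 0")
    case True then show ?thesis using that by (simp add: sysB_entry)
  next
    case False
    have "i - 1 < m - 1" "j - 1 < m - 1" using that False by auto
    then show ?thesis using that False by (auto simp: sysB_entry Pstar_entry)
  qed
  show "Im \<omega> \<le> 0"
  proof (rule energy[OF nz eq])
    show "\<forall>i<m. \<forall>j<m. sysA m \<sigma>0 ?P $$ (i, j) = sysA m \<sigma>0 ?P $$ (j, i)"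
    proof (intro allI impI)
      fix i j assume ij: "i < m" "j < m"
      show "sysA m \<sigma>0 ?P $$ (i, j) = sysA m \<sigma>0 ?P $$ (j, i)"
      proof (cases "i + j = n")
        case False then show ?thesis using ij by (simp add: Achar add.commute)
      next
        case True
        show ?thesis
        proof (cases "i = 0 \<or> j = 0")
          case True
          have e1: "sysA m \<sigma>0 ?P $$ (i, j) = (if i = 0 then \<sigma>0 else Tv m \<sigma>0 (j+1))"
            using Achar[OF ij] \<open>i + j = n\<close> by simp
          have e2: "sysA m \<sigma>0 ?P $$ (j, i) = (if j = 0 then \<sigma>0 else Tv m \<sigma>0 (i+1))"
            using Achar[OF ij(2) ij(1)] \<open>i + j = n\<close> by (simp add: add.commute)
          have t1: "Tv m \<sigma>0 1 = \<sigma>0" using m n1 by (intro T1) auto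
          show ?thesis unfolding e1 e2 using True t1 \<open>i + j = n\<close> n1 by auto
        next
          case False
          have "Tv m \<sigma>0 (j+1) = Tv m \<sigma>0 (i+1)"
            by (rule T_sym) (use False \<open>i + j = n\<close> m in auto)
          then show ?thesis using ij \<open>i + j = n\<close> False by (simp add: Achar add.commute)
        qed
      qed
    qed
  next
    show "\<forall>i<m. \<forall>j<m. i \<noteq> j \<longrightarrow> sysB m ?P $$ (i, j) + sysB m ?P $$ (j, i) = 0"
    proof (intro allI impI)
      fix i j assume ij: "i < m" "j < m" "i \<noteq> j"
      show "sysB m ?P $$ (i, j) + sysB m ?P $$ (j, i) = 0"
      proof (cases "i = 0 \<or> j = 0 \<or> i + j \<noteq> m")
        case True then show ?thesis using ij by (auto simp: Bchar add.commute)
      next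
        case False
        hence "Tv m \<sigma>0 j + Tv m \<sigma>0 i = 0" using ij by (intro T_anti) auto
        then show ?thesis using ij False by (simp add: Bchar add.commute)
      qed
    qed
  next
    show "\<forall>i<m. sysB m ?P $$ (i, i) \<le> 0"
    proof (intro allI impI)
      fix i assume i: "i < m"
      show "sysB m ?P $$ (i, i) \<le> 0"
      proof (cases "i \<noteq> 0 \<and> 2 * i = m")
        case True
        hence "even m" by presburger
        hence "\<sigma>0 = (-1) ^ (m div 2)" by (rule s3)
        hence "Tv m \<sigma>0 i = -1" using True by (intro T_mid) auto
        then show ?thesis using i True by (simp add: Bchar mult_2)
      next
        case False then show ?thesis using i by (auto simp: Bchar mult_2)
      qed
    qed
  next
    show "\<forall>i<m. \<forall>j<m. i \<noteq> j \<longrightarrow> sysD m \<tau> $$ (i, j) = 0" by (simp add: sysD_entry)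
  next
    show "\<forall>i<m. sysD m \<tau> $$ (i, i) > 0" using tau by (simp add: sysD_entry)
  qed
qed

lemma pm_prod:
  fixes a b :: real
  assumes "a = 1 \<or> a = -1" "b = 1 \<or> b = -1"
  shows "complex_of_real a * complex_of_real b \<noteq> 1 \<Longrightarrow> a * b = -1"
    and "complex_of_real a * complex_of_real b \<noteq> -1 \<Longrightarrow> a * b = 1"
  using assms by auto

lemma stable_imp:
  assumes m: "m = Suc n" and n1: "n \<ge> 1" and \<sigma>: "\<sigma>0 = 1 \<or> \<sigma>0 = -1"
    and sp: "signed_perm_mat n P" and st: "stable_system m \<sigma>0 P"
  shows "P = Pstar m \<sigma>0"
proof -
  obtain h w where hn: "\<forall>r<n. h r < n" and inj: "inj_on h {..<n}" and wpm: "\<forall>r<n. w r = 1 \<or> w r = -1"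
    and hP: "\<forall>r<n. \<forall>c<n. P$$(r,c) = (if c = h r then w r else 0)"
    using sp_struct[OF sp] by blast
  have Pc: "P \<in> carrier_mat n n" using sp by (simp add: signed_perm_mat_def)
  have Pcond: "h (h r) = r \<and> (h r \<noteq> r \<longrightarrow> complex_of_real (w r) * complex_of_real (w (h r)) \<noteq> 1)"
    if r: "r < n" for r
  proof (rule cyc_conditions[OF hn inj wpm, where G = "\<lambda>lam. Re lam > 0"])
    show "\<And>i lam x. i < n \<Longrightarrow> x i = 1 \<Longrightarrow> \<forall>j<n. complex_of_real (w j) * x (h j) = lam * x j \<Longrightarrow> 0 < Re lam \<Longrightarrow> False"
      using unstable_P[OF m hP hn] st by blast
    show "\<And>L c. 3 \<le> L \<Longrightarrow> c = 1 \<or> c = -1 \<Longrightarrow> \<exists>lam. lam^L = c \<and> 0 < Re lam" by (rule lam_re)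
    show "\<exists>lam::complex. lam^2 = 1 \<and> 0 < Re lam" by (intro exI[of _ 1]) auto
    show "r < n" by (rule r)
  qed
  define g where "g i = (if i = 0 then n else h (i - 1))" for i
  define wg where "wg i = (if i = 0 then \<sigma>0 else w (i - 1))" for i
  have gm: "\<forall>i<m. g i < m"
  proof (intro allI impI)
    fix i assume i: "i < m"
    show "g i < m"
    proof (cases "i = 0")
      case False
      hence "h (i - 1) < n" using hn i m by simp
      then show ?thesis using False m by (simp add: g_def)
    qed (use m in \<open>simp add: g_def\<close>)
  qed
  have ginj: "inj_on g {..<m}"
  proof (rule inj_onI)
    fix a b assume ab: "a \<in> {..<m}" "b \<in> {..<m}" "g a = g b"
    show "a = b"
    proof (cases "a = 0 \<or> b = 0")
      case True
      { fix x y assume xy: "x = 0" "y \<in> {..<m}" "y \<noteq> 0" "g x = g y"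
        hence "h (y - 1) < n" using hn m by simp
        moreover have "h (y - 1) = n" using xy by (simp add: g_def)
        ultimately have False by simp }
      then show ?thesis using ab True by metis
    next
      case False
      hence "h (a - 1) = h (b - 1)" using ab by (simp add: g_def)
      hence "a - 1 = b - 1" using inj ab m False by (auto dest: inj_onD)
      then show ?thesis using False by linarith
    qed
  qed
  have wgpm: "\<forall>i<m. wg i = 1 \<or> wg i = -1" using wpm \<sigma> m by (auto simp: wg_def)
  have Ag: "\<forall>i<m. \<forall>j<m. sysA m \<sigma>0 P $$ (i,j) = (if j = g i then wg i else 0)"
  proof (intro allI impI)
    fix i j assume ij: "i < m" "j < m"
    show "sysA m \<sigma>0 P $$ (i,j) = (if j = g i then wg i else 0)"
    proof (cases "i = 0")
      case True then show ?thesis using ij m by (simp add: sysA_entry g_def wg_def)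
    next
      case False
      have hi: "h (i - 1) < n" using hn ij False m by simp
      show ?thesis
      proof (cases "j = n")
        case True then show ?thesis using ij m False hi by (simp add: sysA_entry g_def wg_def)
      next
        case False
        hence "j < n" using ij m by simp
        then show ?thesis using ij m \<open>i \<noteq> 0\<close> hP hi by (simp add: sysA_entry g_def wg_def)
      qed
    qed
  qed
  have Acond: "g (g i) = i \<and> (g i \<noteq> i \<longrightarrow> complex_of_real (wg i) * complex_of_real (wg (g i)) \<noteq> -1)"
    if i: "i < m" for i
  proof (rule cyc_conditions[OF gm ginj wgpm, where G = "\<lambda>lam. Im lam \<noteq> 0"])
    show "\<And>i lam x. i < m \<Longrightarrow> x i = 1 \<Longrightarrow> \<forall>j<m. complex_of_real (wg j) * x (g j) = lam * x j \<Longrightarrow> Im lam \<noteq> 0 \<Longrightarrow> False"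
      using unstable_A[OF m Ag gm] st by blast
    show "\<And>L c. 3 \<le> L \<Longrightarrow> c = 1 \<or> c = -1 \<Longrightarrow> \<exists>lam. lam^L = c \<and> Im lam \<noteq> 0" by (rule lam_im)
    show "\<exists>lam::complex. lam^2 = -1 \<and> Im lam \<noteq> 0" by (intro exI[of _ \<i>]) auto
    show "i < m" by (rule i)
  qed
  have Pb: "w r * w (h r) = -1" if "r < n" "h r \<noteq> r" for r
    using Pcond[OF that(1)] that(2) wpm that(1) hn
    by (intro pm_prod(1)) auto
  have Ad: "wg i * wg (g i) = 1" if "i < m" "g i \<noteq> i" for i
    using Acond[OF that(1)] that(2) wgpm that(1) gm
    by (intro pm_prod(2)) auto
  have g0: "g 0 = n" by (simp add: g_def)
  have gS: "g i = h (i - 1)" if "i \<noteq> 0" for i using that by (simp add: g_def)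
  have hlast: "h (n - 1) = 0"
  proof -
    have "g (g 0) = 0" using Acond[of 0] m by simp
    thus ?thesis using g0 gS[of n] n1 by simp
  qed
  have H: "r < n \<longrightarrow> h r = n - 1 - r" for r
  proof (induction r)
    case 0
    have "h (h (n - 1)) = n - 1" using Pcond[of "n - 1"] n1 by simp
    then show ?case using hlast by simp
  next
    case (Suc r)
    show ?case
    proof
      assume r: "Suc r < n"
      hence IH: "h r = n - 1 - r" using Suc by simp
      have "g (Suc r) = n - 1 - r" using IH gS[of "Suc r"] by simp
      moreover have "g (g (Suc r)) = Suc r" using Acond[of "Suc r"] m r by simp
      ultimately have "g (n - 1 - r) = Suc r" by simp
      hence e: "h (n - 2 - r) = Suc r" using gS[of "n - 1 - r"] r by simp
      have "h (h (n - 2 - r)) = n - 2 - r" using Pcond[of "n - 2 - r"] r by simp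
      with e show "h (Suc r) = n - 1 - Suc r" by simp
    qed
  qed
  have W: "1 \<le> j \<and> j \<le> n \<longrightarrow> w (n - j) = Tv m \<sigma>0 j" for j
  proof (induction j)
    case 0 then show ?case by simp
  next
    case (Suc j)
    show ?case
    proof
      assume j: "1 \<le> Suc j \<and> Suc j \<le> n"
      show "w (n - Suc j) = Tv m \<sigma>0 (Suc j)"
      proof (cases "j = 0")
        case True
        have "g 0 \<noteq> 0" using g0 n1 by simp
        hence "wg 0 * wg (g 0) = 1" using Ad[of 0] m by simp
        hence "\<sigma>0 * w (n - 1) = 1" using g0 n1 by (simp add: wg_def)
        hence "w (n - 1) = \<sigma>0" using \<sigma> by auto
        moreover have "Tv m \<sigma>0 1 = \<sigma>0" using m n1 by (intro T1) auto
        ultimately show ?thesis using True by simp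
      next
        case False
        hence IH: "w (n - j) = Tv m \<sigma>0 j" using Suc j by simp
        define i where "i = n - j"
        have i1: "1 \<le> i" "i < m" using j m i_def by auto
        have gi: "g i = j" using gS[of i] H[of "i - 1"] i1 m i_def j by simp
        have e1: "w (n - j - 1) = w (j - 1)"
        proof (cases "j = i")
          case True then show ?thesis using i_def by simp
        next
          case False
          hence "wg i * wg j = 1" using Ad[OF i1(2)] gi by simp
          hence "w (i - 1) * w (j - 1) = 1" using i1 \<open>j \<noteq> 0\<close> by (simp add: wg_def)
          moreover have "w (i - 1) = 1 \<or> w (i - 1) = -1" "w (j - 1) = 1 \<or> w (j - 1) = -1"
            using wpm i1 j m by auto
          ultimately have "w (i - 1) = w (j - 1)" by auto
          then show ?thesis using i_def by (simp add: diff_commute)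
        qed
        have hj: "h (j - 1) = n - j" using H[of "j - 1"] j \<open>j \<noteq> 0\<close> by simp
        have e2: "w (j - 1) = (if 2 * j = m then w (n - j) else - w (n - j))"
        proof (cases "2 * j = m")
          case True
          hence "n - j = j - 1" using m by simp
          then show ?thesis using True by simp
        next
          case False
          hence "n - j \<noteq> j - 1" using m j \<open>j \<noteq> 0\<close> by auto
          hence "h (j - 1) \<noteq> j - 1" using hj by simp
          hence "w (j - 1) * w (n - j) = -1" using Pb[of "j - 1"] hj j by simp
          moreover have "w (j - 1) = 1 \<or> w (j - 1) = -1" "w (n - j) = 1 \<or> w (n - j) = -1"
            using wpm j \<open>j \<noteq> 0\<close> by auto
          ultimately show ?thesis using False by auto
        qed
        have "Tv m \<sigma>0 (j+1) = (if 2 * j = m then Tv m \<sigma>0 j else - Tv m \<sigma>0 j)"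
          using \<open>j \<noteq> 0\<close> j m by (intro T_step) auto
        moreover have "n - Suc j = n - j - 1" by simp
        ultimately show ?thesis using e1 e2 IH by simp
      qed
    qed
  qed
  show ?thesis
  proof (rule eq_matI)
    fix r c assume rc: "r < dim_row (Pstar m \<sigma>0)" "c < dim_col (Pstar m \<sigma>0)"
    hence rc: "r < n" "c < n" using Pstar_carrier[of m \<sigma>0] m by auto
    have Pe: "P $$ (r,c) = (if c = n - 1 - r then w r else 0)" using hP rc H[of r] by simp
    have Se: "Pstar m \<sigma>0 $$ (r,c) = (if r + c + 2 \<noteq> m then 0 else Tv m \<sigma>0 (c+1))"
      using rc m by (intro Pstar_entry) auto
    show "P $$ (r,c) = Pstar m \<sigma>0 $$ (r,c)"
    proof (cases "c = n - 1 - r")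
      case True
      have "w (n - (n - r)) = Tv m \<sigma>0 (n - r)" using W[of "n - r"] rc by simp
      moreover have "n - (n - r) = r" "c + 1 = n - r" using rc True by auto
      moreover have "r + c + 2 = m" using True rc m by simp
      ultimately show ?thesis using Pe Se True by simp
    next
      case False
      hence "r + c + 2 \<noteq> m" using rc m by simp
      then show ?thesis using Pe Se False by simp
    qed
  qed (use Pc Pstar_carrier[of m \<sigma>0] m in auto)
qed

theorem theorem1:
  fixes m :: nat and \<sigma>0 :: real and P :: "real mat"
  assumes "m \<ge> 2"
    and "odd m \<Longrightarrow> \<sigma>0 = 1 \<or> \<sigma>0 = -1"
    and "even m \<Longrightarrow> \<sigma>0 = (-1) ^ (m div 2)"
    and "signed_perm_mat (m - 1) P"
  shows "stable_system m \<sigma>0 P \<longleftrightarrow> P = Pstar m \<sigma>0"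
proof -
  define n where "n = m - 1"
  have m: "m = Suc n" using assms(1) by (simp add: n_def)
  have n1: "n \<ge> 1" using assms(1) by (simp add: n_def)
  have \<sigma>: "\<sigma>0 = 1 \<or> \<sigma>0 = -1"
  proof (cases "even m")
    case True
    then show ?thesis using assms(3) by (simp add: minus_one_power_iff)
  next
    case False
    then show ?thesis using assms(2) by simp
  qed
  have sp: "signed_perm_mat n P" using assms(4) by (simp add: n_def)
  show ?thesis
  proof
    assume "stable_system m \<sigma>0 P"
    then show "P = Pstar m \<sigma>0" by (rule stable_imp[OF m n1 \<sigma> sp])
  next
    assume "P = Pstar m \<sigma>0"
    then show "stable_system m \<sigma>0 P" using stable_Pstar[OF m n1 assms(3)] by simp
  qed
qed

end
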